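(* Let $U$ be a Hilbert space, $H: U\rightrightarrows U$ with $H^{-1}(0)\neq\emptyset$, and for each $i\in\mathbb{N}$ let $\widetilde H_{i+1}: U\rightrightarrows U$ and $M_{i+1}, Z_{i+1}, P_{i+1}\in\mathcal{L}(U;U)$ with $Z_{i+1}M_{i+1}$ self-adjoint and $Z_{i+1}M_{i+1}\ge0$. Let $(u^i)_{i\in\mathbb{N}}\subset U$ satisfy $0\in\widetilde H_{i+1}(u^{i+1}) + M_{i+1}(u^{i+1}-u^i)$ for all $i$. Let $\delta\in[0,1]$ and suppose that for all $i$, $Z_{i+2}M_{i+2}\ge Z_{i+1}P_{i+1}$ and the partial error bound \[ \delta\|u^{i+1}-u^i\|^2_{Z_{i+1}M_{i+1}} + \operatorname{dist}^2_{Z_{i+2}M_{i+2}-Z_{i+1}P_{i+1}}(u^{i+1}, H^{-1}(0)) \ge \operatorname{dist}^2_{Z_{i+2}M_{i+2}}(u^{i+1},H^{-1}(0)) \] holds. Suppose further that for every $i$ there is $\Delta_{i+1}\in\mathbb{R}$ such that for all $u^*\in H^{-1}(0)$ and all $q\in\widetilde H_{i+1}(u^{i+1})$, \[ \tfrac{1-\delta}{2}\|u^{i+1}-u^i\|^2_{Z_{i+1}M_{i+1}} + \tfrac12\|u^{i+1}-u^*\|^2_{Z_{i+1}(M_{i+1}+P_{i+1})-Z_{i+2}M_{i+2}} + \langle q, u^{i+1}-u^*\rangle_{Z_{i+1}} \ge -\Delta_{i+1}. \] Then for all $N\ge1$, \[ \tfrac12 \operatorname{dist}^2_{Z_{N+1}M_{N+1}}(u^N,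 H^{-1}(0)) \le \tfrac12 \operatorname{dist}^2_{Z_1M_1}(u^0, H^{-1}(0)) + \sum_{i=0}^{N-1}\Delta_{i+1}. \]
   Context: For $T\in\mathcal{L}(U;U)$ (bounded linear, not necessarily self-adjoint): $\langle x,z\rangle_T:=\langle Tx,z\rangle$, $\|x\|_T^2:=\langle Tx,x\rangle$, $\operatorname{dist}_T^2(z,A):=\inf_{u\in A}\|z-u\|_T^2$; $T\ge S$ means $T-S$ positive semidefinite. $H^{-1}(0):=\{u: 0\in H(u)\}$. *)

theory Defs
  imports "HOL-Analysis.Analysis"
begin

text \<open>Real Hilbert space: type class real_inner + complete_space.
  Operators in L(U;U): functions with bounded_linear. Set-valued maps: 'a \<Rightarrow> 'a set.\<close>

definition tinner :: "('a::real_inner \<Rightarrow> 'a) \<Rightarrow> 'a \<Rightarrow> 'a \<Rightarrow> real" where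
  "tinner T x z = inner (T x) z"

definition tnorm2 :: "('a::real_inner \<Rightarrow> 'a) \<Rightarrow> 'a \<Rightarrow> real" where
  "tnorm2 T x = inner (T x) x"

definition tdist2 :: "('a::real_inner \<Rightarrow> 'a) \<Rightarrow> 'a \<Rightarrow> 'a set \<Rightarrow> real" where
  "tdist2 T z A = (INF u\<in>A. tnorm2 T (z - u))"

definition self_adjoint_op :: "('a::real_inner \<Rightarrow> 'a) \<Rightarrow> bool" where
  "self_adjoint_op T \<longleftrightarrow> (\<forall>x y. inner (T x) y = inner x (T y))"

definition op_ge :: "('a::real_inner \<Rightarrow> 'a) \<Rightarrow> ('a \<Rightarrow> 'a) \<Rightarrow> bool" where
  "op_ge T S \<longleftrightarrow> (\<forall>x. inner (T x - S x) x \<ge> 0)"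

definition zeros :: "('a::real_inner \<Rightarrow> 'a set) \<Rightarrow> 'a set" where
  "zeros H = {u. 0 \<in> H u}"

end

theory Submission
  imports Defs
begin

lemma inf_le_aux:
  assumes "c \<in> A" "\<And>v. v \<in> A \<Longrightarrow> (0::real) \<le> f v"
  shows "(INF v\<in>A. f v) \<le> f c"
  by (rule cINF_lower) (use assms in \<open>auto intro!: bdd_belowI2\<close>)

theorem corollary3p11:
  fixes H :: "'a::{real_inner, complete_space} \<Rightarrow> 'a set"
    and Ht :: "nat \<Rightarrow> 'a \<Rightarrow> 'a set"
    and M Z P :: "nat \<Rightarrow> 'a \<Rightarrow> 'a"
    and u :: "nat \<Rightarrow> 'a"
    and \<delta> :: real
    and \<Delta> :: "nat \<Rightarrow> real"
  assumes Hne: "zeros H \<noteq> {}"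
    and lin: "\<And>i. bounded_linear (M (i+1)) \<and> bounded_linear (Z (i+1)) \<and> bounded_linear (P (i+1))"
    and sa: "\<And>i. self_adjoint_op (Z (i+1) \<circ> M (i+1))"
    and pos: "\<And>i. op_ge (Z (i+1) \<circ> M (i+1)) (\<lambda>x. 0)"
    and iter: "\<And>i. 0 \<in> (\<lambda>h. h + M (i+1) (u (i+1) - u i)) ` Ht (i+1) (u (i+1))"
    and \<delta>: "0 \<le> \<delta>" "\<delta> \<le> 1"
    and ge: "\<And>i. op_ge (Z (i+2) \<circ> M (i+2)) (Z (i+1) \<circ> P (i+1))"
    and peb: "\<And>i. \<delta> * tnorm2 (Z (i+1) \<circ> M (i+1)) (u (i+1) - u i)
              + tdist2 (\<lambda>x. Z (i+2) (M (i+2) x) - Z (i+1) (P (i+1) x)) (u (i+1)) (zeros H)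
              \<ge> tdist2 (Z (i+2) \<circ> M (i+2)) (u (i+1)) (zeros H)"
    and Delta: "\<And>i ustar q. ustar \<in> zeros H \<Longrightarrow> q \<in> Ht (i+1) (u (i+1)) \<Longrightarrow>
              (1 - \<delta>) / 2 * tnorm2 (Z (i+1) \<circ> M (i+1)) (u (i+1) - u i)
              + 1/2 * tnorm2 (\<lambda>x. Z (i+1) (M (i+1) x + P (i+1) x) - Z (i+2) (M (i+2) x)) (u (i+1) - ustar)
              + tinner (Z (i+1)) q (u (i+1) - ustar) \<ge> - \<Delta> (i+1)"
  shows "\<And>N. N \<ge> 1 \<Longrightarrow>
     1/2 * tdist2 (Z (N+1) \<circ> M (N+1)) (u N) (zeros H)
     \<le> 1/2 * tdist2 (Z 1 \<circ> M 1) (u 0) (zeros H) + (\<Sum>i<N. \<Delta> (i+1))"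
proof -
  have step: "tdist2 (Z (i+2) \<circ> M (i+2)) (u (i+1)) (zeros H)
      \<le> tdist2 (Z (i+1) \<circ> M (i+1)) (u i) (zeros H) + 2 * \<Delta> (i+1)" for i
  proof -
    obtain h where h: "h \<in> Ht (i+1) (u(i+1))" "0 = h + M (i+1) (u(i+1) - u i)"
      using iter[of i] by auto
    have hq: "h = - M (i+1) (u (i+1) - u i)" using h(2)
      by (metis add.commute add_eq_0_iff)
    have linZ1: "linear (Z (i+1))" and linM1: "linear (M (i+1))"
      using lin[of i] bounded_linear.linear by blast+
    have saI: "inner (Z (i+1) (M (i+1) p)) q = inner p (Z (i+1) (M (i+1) q))" for p q
      using sa[of i] unfolding self_adjoint_op_def by simp
    have nn1: "0 \<le> tnorm2 (\<lambda>x. Z (i+2) (M (i+2) x) - Z (i+1) (P (i+1) x)) v" for v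
      using ge[of i] unfolding op_ge_def tnorm2_def by simp
    have nn0: "0 \<le> tnorm2 (Z (i+1) \<circ> M (i+1)) v" for v
      using pos[of i] unfolding op_ge_def tnorm2_def by simp
    define a where "a = u (i+1)"
    define b where "b = u i"
    define X where "X = tnorm2 (Z (i+1) \<circ> M (i+1)) (a - b)"
    have key: "tnorm2 (\<lambda>x. Z (i+2) (M (i+2) x) - Z (i+1) (P (i+1) x)) (a - c) + \<delta> * X - 2 * \<Delta> (i+1)
        \<le> tnorm2 (Z (i+1) \<circ> M (i+1)) (b - c)" if c: "c \<in> zeros H" for c
    proof -
      define x where "x = a - b"
      define y where "y = a - c"
      have D: "(1 - \<delta>) / 2 * X
              + 1/2 * tnorm2 (\<lambda>x. Z (i+1) (M (i+1) x + P (i+1) x) - Z (i+2) (M (i+2) x)) y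
              + tinner (Z (i+1)) h y \<ge> - \<Delta> (i+1)"
        using Delta[OF c h(1)] unfolding X_def y_def a_def b_def by simp
      have E1: "tnorm2 (\<lambda>x. Z (i+1) (M (i+1) x + P (i+1) x) - Z (i+2) (M (i+2) x)) y
          = inner (Z (i+1) (M (i+1) y)) y + inner (Z (i+1) (P (i+1) y)) y - inner (Z (i+2) (M (i+2) y)) y"
        using linear_add[OF linZ1, of "M (i+1) y" "P (i+1) y"] by (simp add: tnorm2_def inner_diff_left inner_add_left)
      have E2: "tnorm2 (\<lambda>x. Z (i+2) (M (i+2) x) - Z (i+1) (P (i+1) x)) y
          = inner (Z (i+2) (M (i+2) y)) y - inner (Z (i+1) (P (i+1) y)) y"
        by (simp add: tnorm2_def inner_diff_left)
      have E3: "tinner (Z (i+1)) h y = - inner (Z (i+1) (M (i+1) x)) y"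
        using linear_neg[OF linZ1, of "M (i+1) (u (i+1) - u i)"]
        by (simp add: tinner_def hq x_def a_def b_def)
      have bc: "b - c = y - x" by (simp add: x_def y_def)
      have E4: "tnorm2 (Z (i+1) \<circ> M (i+1)) (b - c) = inner (Z (i+1) (M (i+1) y)) y
           - 2 * inner (Z (i+1) (M (i+1) x)) y + X"
        unfolding bc X_def x_def[symmetric]
        using linear_diff[OF linZ1, of "M (i+1) y" "M (i+1) x"] linear_diff[OF linM1, of y x] saI[of y x]
        by (simp add: tnorm2_def inner_diff_left inner_diff_right inner_commute[of y])
      show ?thesis unfolding y_def[symmetric] using D E1 E2 E3 E4
        by (simp add: field_simps)
    qed
    have A: "tdist2 (\<lambda>x. Z (i+2) (M (i+2) x) - Z (i+1) (P (i+1) x)) a (zeros H) + \<delta> * X - 2 * \<Delta> (i+1)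
        \<le> tdist2 (Z (i+1) \<circ> M (i+1)) b (zeros H)"
      unfolding tdist2_def
    proof (rule cINF_greatest[OF Hne])
      fix c assume c: "c \<in> zeros H"
      have "(INF v\<in>zeros H. tnorm2 (\<lambda>x. Z (i+2) (M (i+2) x) - Z (i+1) (P (i+1) x)) (a - v))
         \<le> tnorm2 (\<lambda>x. Z (i+2) (M (i+2) x) - Z (i+1) (P (i+1) x)) (a - c)"
        by (rule inf_le_aux[OF c nn1])
      then show "(INF v\<in>zeros H. tnorm2 (\<lambda>x. Z (i+2) (M (i+2) x) - Z (i+1) (P (i+1) x)) (a - v))
          + \<delta> * X - 2 * \<Delta> (i+1) \<le> tnorm2 (Z (i+1) \<circ> M (i+1)) (b - c)"
        using key[OF c] by linarith
    qed
    show ?thesis using A peb[of i] unfolding X_def a_def b_def by linarith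
  qed
  have all: "tdist2 (Z (N+1) \<circ> M (N+1)) (u N) (zeros H)
     \<le> tdist2 (Z 1 \<circ> M 1) (u 0) (zeros H) + 2 * (\<Sum>i<N. \<Delta> (i+1))" for N
  proof (induction N)
    case 0 then show ?case by simp
  next
    case (Suc N)
    have "tdist2 (Z (N+2) \<circ> M (N+2)) (u (N+1)) (zeros H)
      \<le> tdist2 (Z (N+1) \<circ> M (N+1)) (u N) (zeros H) + 2 * \<Delta> (N+1)" by (rule step)
    then show ?case using Suc.IH by (simp add: algebra_simps comp_def)
  qed
  show "1/2 * tdist2 (Z (N+1) \<circ> M (N+1)) (u N) (zeros H)
     \<le> 1/2 * tdist2 (Z 1 \<circ> M 1) (u 0) (zeros H) + (\<Sum>i<N. \<Delta> (i+1))" for N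
    using all[of N] by simp
qed

end
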